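(* Let $G$ be a finite group with $c(G)$ conjugacy classes, and let $\pi\in S_4$ be a non-identity permutation with $\pi(1)=1$ or $\pi(4)=4$. Then $Pr_\pi(G)=\frac{c(G)}{|G|}$.
   Context: For $\pi\in S_n$ written in one-line notation $\langle\pi_1\dots\pi_n\rangle$, $Pr_\pi(G)$ is the probability that $a_1a_2\cdots a_n=a_{\pi_1}a_{\pi_2}\cdots a_{\pi_n}$ when $a_1,\dots,a_n$ are independent uniformly random elements of the finite group $G$. $c(G)$ is the number of conjugacy classes of $G$. *)

theory Defs
  imports "HOL-Algebra.Algebra" "HOL-Combinatorics.Permutations" "HOL-Library.FuncSet"
begin

fun word_prod :: "('g, 'b) monoid_scheme \<Rightarrow> (nat \<Rightarrow> 'g) \<Rightarrow> nat list \<Rightarrow> 'g" where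
  "word_prod G a [] = \<one>\<^bsub>G\<^esub>"
| "word_prod G a (i # is) = a i \<otimes>\<^bsub>G\<^esub> word_prod G a is"

(* Pr_pi(G): probability that a_1...a_n = a_{pi 1} ... a_{pi n} for independent
   uniform a_1,...,a_n in G; computed as (number of solutions) / |G|^n *)
definition Pr_perm :: "('g, 'b) monoid_scheme \<Rightarrow> nat \<Rightarrow> (nat \<Rightarrow> nat) \<Rightarrow> real" where
  "Pr_perm G n \<pi> =
     real (card {a \<in> {1..n} \<rightarrow>\<^sub>E carrier G.
                   word_prod G a [1..<n+1] = word_prod G a (map \<pi> [1..<n+1])})
     / real (order G) ^ n"

definition conj_classes :: "('g, 'b) monoid_scheme \<Rightarrow> 'g set set" where
  "conj_classes G = {{g \<otimes>\<^bsub>G\<^esub> x \<otimes>\<^bsub>G\<^esub> inv\<^bsub>G\<^esub> g | g. g \<in> carrier G} | x. x \<in> carrier G}"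

end

theory Submission imports Defs begin
context group begin
lemma inv_cancel_l' [simp]: "x \<in> carrier G \<Longrightarrow> a \<in> carrier G \<Longrightarrow> inv x \<otimes> (x \<otimes> a) = a"
  by (simp add: m_assoc[symmetric])
lemma inv_cancel_l'' [simp]: "x \<in> carrier G \<Longrightarrow> a \<in> carrier G \<Longrightarrow> x \<otimes> (inv x \<otimes> a) = a"
  by (simp add: m_assoc[symmetric])
lemma eqC: assumes [simp]: "w \<in> carrier G" "x \<in> carrier G" "y \<in> carrier G" "z \<in> carrier G"
  shows "(x\<otimes>y\<otimes>z = z\<otimes>y\<otimes>x) \<longleftrightarrow> (x\<otimes>y)\<otimes>(z\<otimes>inv x) = (z\<otimes>inv x)\<otimes>(x\<otimes>y)"
proof -
  have "(x\<otimes>y)\<otimes>(z\<otimes>inv x) = (z\<otimes>inv x)\<otimes>(x\<otimes>y) \<longleftrightarrow> (x\<otimes>y)\<otimes>(z\<otimes>inv x) \<otimes> x = (z\<otimes>inv x)\<otimes>(x\<otimes>y) \<otimes> x"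
    by simp
  also have "\<dots> \<longleftrightarrow> x\<otimes>y\<otimes>z = z\<otimes>y\<otimes>x" by (simp add: m_assoc)
  finally show ?thesis by simp
qed
lemma eqG: assumes [simp]: "w \<in> carrier G" "x \<in> carrier G" "y \<in> carrier G" "z \<in> carrier G"
  shows "(w\<otimes>x\<otimes>y = y\<otimes>x\<otimes>w) \<longleftrightarrow> (w\<otimes>x)\<otimes>(y\<otimes>inv w) = (y\<otimes>inv w)\<otimes>(w\<otimes>x)"
  using eqC[of w w x y] by simp
lemma eqD: assumes [simp]: "x \<in> carrier G" "y \<in> carrier G" "z \<in> carrier G"
  shows "(x\<otimes>y\<otimes>z = y\<otimes>z\<otimes>x) \<longleftrightarrow> x\<otimes>(y\<otimes>z) = (y\<otimes>z)\<otimes>x"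
  by (simp add: m_assoc)
lemma eqE: assumes [simp]: "x \<in> carrier G" "y \<in> carrier G" "z \<in> carrier G"
  shows "(x\<otimes>y\<otimes>z = z\<otimes>x\<otimes>y) \<longleftrightarrow> (x\<otimes>y)\<otimes>z = z\<otimes>(x\<otimes>y)"
  by (simp add: m_assoc)
end

context group begin
lemma conj_fix_iff: "g \<in> carrier G \<Longrightarrow> x \<in> carrier G \<Longrightarrow> (g \<otimes> x \<otimes> inv g = x) \<longleftrightarrow> g \<otimes> x = x \<otimes> g"
proof -
  assume [simp]: "g \<in> carrier G" "x \<in> carrier G"
  have "(g \<otimes> x \<otimes> inv g = x) \<longleftrightarrow> g \<otimes> x \<otimes> inv g \<otimes> g = x \<otimes> g" by simp
  also have "\<dots> \<longleftrightarrow> g \<otimes> x = x \<otimes> g" by (simp add: m_assoc)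
  finally show ?thesis .
qed

lemma comm_count:
  assumes fin: "finite (carrier G)"
  shows "card {(x,y). x \<in> carrier G \<and> y \<in> carrier G \<and> x \<otimes> y = y \<otimes> x} = card (conj_classes G) * order G"
proof -
  let ?phi = "\<lambda>g. (\<lambda>h \<in> carrier G. g \<otimes> h \<otimes> (inv g))"
  interpret A: group_action G "carrier G" ?phi by (rule action_by_conjugation)
  have b: "card (orbits G (carrier G) ?phi) * order G = (\<Sum>g \<in> carrier G. card (invariants (carrier G) ?phi g))"
    using A.burnside fin by blast
  have orb: "orbits G (carrier G) ?phi = conj_classes G"
  proof -
    have "\<And>x. x \<in> carrier G \<Longrightarrow> orbit G ?phi x = {g \<otimes> x \<otimes> inv g | g. g \<in> carrier G}"
      unfolding orbit_def by auto
    then show ?thesis unfolding orbits_def conj_classes_def by auto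
  qed
  have inv: "\<And>g. g \<in> carrier G \<Longrightarrow> invariants (carrier G) ?phi g = {x \<in> carrier G. g \<otimes> x = x \<otimes> g}"
    unfolding invariants_def using conj_fix_iff by auto
  have "(\<Sum>g \<in> carrier G. card (invariants (carrier G) ?phi g)) = (\<Sum>g \<in> carrier G. card {x \<in> carrier G. g \<otimes> x = x \<otimes> g})"
    using inv by simp
  also have "\<dots> = card (SIGMA g:carrier G. {x \<in> carrier G. g \<otimes> x = x \<otimes> g})"
    using fin by (simp add: card_SigmaI)
  also have "(SIGMA g:carrier G. {x \<in> carrier G. g \<otimes> x = x \<otimes> g}) = {(x,y). x \<in> carrier G \<and> y \<in> carrier G \<and> x \<otimes> y = y \<otimes> x}"
    by auto
  finally show ?thesis using b orb by (simp only:)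
qed
end

lemma count_bij:
  assumes "\<And>t. t\<in>Q \<Longrightarrow> g (f t) = t" "\<And>t. t\<in>Q \<Longrightarrow> f (g t) = t"
    "\<And>t. t\<in>Q \<Longrightarrow> f t \<in> Q" "\<And>t. t\<in>Q \<Longrightarrow> g t \<in> Q" "\<And>t. t\<in>Q \<Longrightarrow> P t \<longleftrightarrow> R (f t)"
  shows "card {t\<in>Q. P t} = card {t\<in>Q. R t}"
proof -
  have "bij_betw f {t\<in>Q. P t} {t\<in>Q. R t}"
    apply (rule bij_betw_byWitness[where f'=g])
    using assms by auto
  then show ?thesis by (rule bij_betw_same_card)
qed

context group begin
abbreviation "Q4 \<equiv> carrier G \<times> carrier G \<times> carrier G \<times> carrier G"
abbreviation "T4 \<equiv> {t\<in>Q4. case t of (u,v,s,r) \<Rightarrow> u \<otimes> v = v \<otimes> u}"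


lemma eq4A: assumes [simp]: "w \<in> carrier G" "x \<in> carrier G" "y \<in> carrier G" "z \<in> carrier G"
  shows "(w\<otimes>x\<otimes>y\<otimes>z = w\<otimes>y\<otimes>x\<otimes>z) \<longleftrightarrow> x\<otimes>y = y\<otimes>x"
proof -
  have "(w\<otimes>x\<otimes>y\<otimes>z = w\<otimes>y\<otimes>x\<otimes>z) \<longleftrightarrow> (w\<otimes>x\<otimes>y\<otimes>z \<otimes> inv z = w\<otimes>y\<otimes>x\<otimes>z \<otimes> inv z)" by simp
  also have "\<dots> \<longleftrightarrow> (w\<otimes>x\<otimes>y = w\<otimes>y\<otimes>x\<otimes>z \<otimes> inv z)" by (simp add: m_assoc)
  finally show ?thesis by (simp add: m_assoc)
qed

lemma caseA: "card {t\<in>Q4. case t of (w,x,y,z) \<Rightarrow> w\<otimes>x\<otimes>y\<otimes>z = w\<otimes>y\<otimes>x\<otimes>z} = card T4"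
  apply (rule count_bij[where f="\<lambda>(w,x,y,z). (x, y, w, z)" and g = "\<lambda>(u,v,s,t). (s, u, v, t)"])
  using eq4A by (auto simp: m_assoc)

lemma eq4B: assumes [simp]: "w \<in> carrier G" "x \<in> carrier G" "y \<in> carrier G" "z \<in> carrier G"
  shows "(w\<otimes>x\<otimes>y\<otimes>z = w\<otimes>x\<otimes>z\<otimes>y) \<longleftrightarrow> y\<otimes>z = z\<otimes>y"
proof -
  have "(w\<otimes>x\<otimes>y\<otimes>z = w\<otimes>x\<otimes>z\<otimes>y) \<longleftrightarrow> (w\<otimes>x\<otimes>y\<otimes>z \<otimes> inv z = w\<otimes>x\<otimes>z\<otimes>y \<otimes> inv z)" by simp
  also have "\<dots> \<longleftrightarrow> (w\<otimes>x\<otimes>y = w\<otimes>x\<otimes>z\<otimes>y \<otimes> inv z)" by (simp add: m_assoc)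
  finally show ?thesis by (simp add: m_assoc)
qed

lemma caseB: "card {t\<in>Q4. case t of (w,x,y,z) \<Rightarrow> w\<otimes>x\<otimes>y\<otimes>z = w\<otimes>x\<otimes>z\<otimes>y} = card T4"
  apply (rule count_bij[where f="\<lambda>(w,x,y,z). (y, z, w, x)" and g = "\<lambda>(u,v,s,t). (s, t, u, v)"])
  using eq4B by (auto simp: m_assoc)

lemma eq4C: assumes [simp]: "w \<in> carrier G" "x \<in> carrier G" "y \<in> carrier G" "z \<in> carrier G"
  shows "(w\<otimes>x\<otimes>y\<otimes>z = w\<otimes>z\<otimes>y\<otimes>x) \<longleftrightarrow> (x\<otimes>y)\<otimes>(z\<otimes>inv x) = (z\<otimes>inv x)\<otimes>(x\<otimes>y)"
proof -
  have "(w\<otimes>x\<otimes>y\<otimes>z = w\<otimes>z\<otimes>y\<otimes>x) \<longleftrightarrow> (w\<otimes>x\<otimes>y\<otimes>z \<otimes> inv z = w\<otimes>z\<otimes>y\<otimes>x \<otimes> inv z)" by simp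
  also have "\<dots> \<longleftrightarrow> (w\<otimes>x\<otimes>y = w\<otimes>z\<otimes>y\<otimes>x \<otimes> inv z)" by (simp add: m_assoc)
  finally show ?thesis using eqC[of w x y z] by (simp add: m_assoc)
qed

lemma caseC: "card {t\<in>Q4. case t of (w,x,y,z) \<Rightarrow> w\<otimes>x\<otimes>y\<otimes>z = w\<otimes>z\<otimes>y\<otimes>x} = card T4"
  apply (rule count_bij[where f="\<lambda>(w,x,y,z). (x\<otimes>y, z\<otimes>inv x, x, w)" and g = "\<lambda>(u,v,s,t). (t, s, inv s\<otimes>u, v\<otimes>s)"])
  using eq4C by (auto simp: m_assoc)

lemma eq4D: assumes [simp]: "w \<in> carrier G" "x \<in> carrier G" "y \<in> carrier G" "z \<in> carrier G"
  shows "(w\<otimes>x\<otimes>y\<otimes>z = w\<otimes>y\<otimes>z\<otimes>x) \<longleftrightarrow> x\<otimes>(y\<otimes>z) = (y\<otimes>z)\<otimes>x"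
proof -
  have "(w\<otimes>x\<otimes>y\<otimes>z = w\<otimes>y\<otimes>z\<otimes>x) \<longleftrightarrow> (w\<otimes>x\<otimes>y\<otimes>z \<otimes> inv z = w\<otimes>y\<otimes>z\<otimes>x \<otimes> inv z)" by simp
  also have "\<dots> \<longleftrightarrow> (w\<otimes>x\<otimes>y = w\<otimes>y\<otimes>z\<otimes>x \<otimes> inv z)" by (simp add: m_assoc)
  finally show ?thesis using eqD[of x y z] by (simp add: m_assoc)
qed

lemma caseD: "card {t\<in>Q4. case t of (w,x,y,z) \<Rightarrow> w\<otimes>x\<otimes>y\<otimes>z = w\<otimes>y\<otimes>z\<otimes>x} = card T4"
  apply (rule count_bij[where f="\<lambda>(w,x,y,z). (x, y\<otimes>z, y, w)" and g = "\<lambda>(u,v,s,t). (t, u, s, inv s\<otimes>v)"])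
  using eq4D by (auto simp: m_assoc)

lemma eq4E: assumes [simp]: "w \<in> carrier G" "x \<in> carrier G" "y \<in> carrier G" "z \<in> carrier G"
  shows "(w\<otimes>x\<otimes>y\<otimes>z = w\<otimes>z\<otimes>x\<otimes>y) \<longleftrightarrow> (x\<otimes>y)\<otimes>z = z\<otimes>(x\<otimes>y)"
proof -
  have "(w\<otimes>x\<otimes>y\<otimes>z = w\<otimes>z\<otimes>x\<otimes>y) \<longleftrightarrow> (w\<otimes>x\<otimes>y\<otimes>z \<otimes> inv z = w\<otimes>z\<otimes>x\<otimes>y \<otimes> inv z)" by simp
  also have "\<dots> \<longleftrightarrow> (w\<otimes>x\<otimes>y = w\<otimes>z\<otimes>x\<otimes>y \<otimes> inv z)" by (simp add: m_assoc)
  finally show ?thesis using eqE[of x y z] by (simp add: m_assoc)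
qed

lemma caseE: "card {t\<in>Q4. case t of (w,x,y,z) \<Rightarrow> w\<otimes>x\<otimes>y\<otimes>z = w\<otimes>z\<otimes>x\<otimes>y} = card T4"
  apply (rule count_bij[where f="\<lambda>(w,x,y,z). (x\<otimes>y, z, x, w)" and g = "\<lambda>(u,v,s,t). (t, s, inv s\<otimes>u, v)"])
  using eq4E by (auto simp: m_assoc)

lemma eq4F: assumes [simp]: "w \<in> carrier G" "x \<in> carrier G" "y \<in> carrier G" "z \<in> carrier G"
  shows "(w\<otimes>x\<otimes>y\<otimes>z = x\<otimes>w\<otimes>y\<otimes>z) \<longleftrightarrow> w\<otimes>x = x\<otimes>w"
by simp

lemma caseF: "card {t\<in>Q4. case t of (w,x,y,z) \<Rightarrow> w\<otimes>x\<otimes>y\<otimes>z = x\<otimes>w\<otimes>y\<otimes>z} = card T4"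
  apply (rule count_bij[where f="\<lambda>(w,x,y,z). (w, x, y, z)" and g = "\<lambda>(u,v,s,t). (u, v, s, t)"])
  using eq4F by (auto simp: m_assoc)

lemma eq4G: assumes [simp]: "w \<in> carrier G" "x \<in> carrier G" "y \<in> carrier G" "z \<in> carrier G"
  shows "(w\<otimes>x\<otimes>y\<otimes>z = y\<otimes>x\<otimes>w\<otimes>z) \<longleftrightarrow> (w\<otimes>x)\<otimes>(y\<otimes>inv w) = (y\<otimes>inv w)\<otimes>(w\<otimes>x)"
proof -
  have "(w\<otimes>x\<otimes>y\<otimes>z = y\<otimes>x\<otimes>w\<otimes>z) \<longleftrightarrow> (w\<otimes>x\<otimes>y\<otimes>z \<otimes> inv z = y\<otimes>x\<otimes>w\<otimes>z \<otimes> inv z)" by simp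
  also have "\<dots> \<longleftrightarrow> (w\<otimes>x\<otimes>y = y\<otimes>x\<otimes>w\<otimes>z \<otimes> inv z)" by (simp add: m_assoc)
  finally show ?thesis using eqG[of w x y z] by (simp add: m_assoc)
qed

lemma caseG: "card {t\<in>Q4. case t of (w,x,y,z) \<Rightarrow> w\<otimes>x\<otimes>y\<otimes>z = y\<otimes>x\<otimes>w\<otimes>z} = card T4"
  apply (rule count_bij[where f="\<lambda>(w,x,y,z). (w\<otimes>x, y\<otimes>inv w, w, z)" and g = "\<lambda>(u,v,s,t). (s, inv s\<otimes>u, v\<otimes>s, t)"])
  using eq4G by (auto simp: m_assoc)

lemma eq4H: assumes [simp]: "w \<in> carrier G" "x \<in> carrier G" "y \<in> carrier G" "z \<in> carrier G"
  shows "(w\<otimes>x\<otimes>y\<otimes>z = x\<otimes>y\<otimes>w\<otimes>z) \<longleftrightarrow> w\<otimes>(x\<otimes>y) = (x\<otimes>y)\<otimes>w"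
proof -
  have "(w\<otimes>x\<otimes>y\<otimes>z = x\<otimes>y\<otimes>w\<otimes>z) \<longleftrightarrow> (w\<otimes>x\<otimes>y\<otimes>z \<otimes> inv z = x\<otimes>y\<otimes>w\<otimes>z \<otimes> inv z)" by simp
  also have "\<dots> \<longleftrightarrow> (w\<otimes>x\<otimes>y = x\<otimes>y\<otimes>w\<otimes>z \<otimes> inv z)" by (simp add: m_assoc)
  finally show ?thesis using eqD[of w x y] by (simp add: m_assoc)
qed

lemma caseH: "card {t\<in>Q4. case t of (w,x,y,z) \<Rightarrow> w\<otimes>x\<otimes>y\<otimes>z = x\<otimes>y\<otimes>w\<otimes>z} = card T4"
  apply (rule count_bij[where f="\<lambda>(w,x,y,z). (w, x\<otimes>y, x, z)" and g = "\<lambda>(u,v,s,t). (u, s, inv s\<otimes>v, t)"])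
  using eq4H by (auto simp: m_assoc)

lemma eq4I: assumes [simp]: "w \<in> carrier G" "x \<in> carrier G" "y \<in> carrier G" "z \<in> carrier G"
  shows "(w\<otimes>x\<otimes>y\<otimes>z = y\<otimes>w\<otimes>x\<otimes>z) \<longleftrightarrow> (w\<otimes>x)\<otimes>y = y\<otimes>(w\<otimes>x)"
proof -
  have "(w\<otimes>x\<otimes>y\<otimes>z = y\<otimes>w\<otimes>x\<otimes>z) \<longleftrightarrow> (w\<otimes>x\<otimes>y\<otimes>z \<otimes> inv z = y\<otimes>w\<otimes>x\<otimes>z \<otimes> inv z)" by simp
  also have "\<dots> \<longleftrightarrow> (w\<otimes>x\<otimes>y = y\<otimes>w\<otimes>x\<otimes>z \<otimes> inv z)" by (simp add: m_assoc)
  finally show ?thesis using eqE[of w x y] by (simp add: m_assoc)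
qed

lemma caseI: "card {t\<in>Q4. case t of (w,x,y,z) \<Rightarrow> w\<otimes>x\<otimes>y\<otimes>z = y\<otimes>w\<otimes>x\<otimes>z} = card T4"
  apply (rule count_bij[where f="\<lambda>(w,x,y,z). (w\<otimes>x, y, w, z)" and g = "\<lambda>(u,v,s,t). (s, inv s\<otimes>u, v, t)"])
  using eq4I by (auto simp: m_assoc)
end

context group begin
lemma card_T4: assumes fin: "finite (carrier G)"
  shows "card T4 = card (conj_classes G) * order G * order G * order G"
proof -
  let ?P = "{(x,y). x \<in> carrier G \<and> y \<in> carrier G \<and> x \<otimes> y = y \<otimes> x}"
  have "bij_betw (\<lambda>((u,v),(s,r)). (u,v,s,r)) (?P \<times> (carrier G \<times> carrier G)) T4"
    by (rule bij_betw_byWitness[where f'="\<lambda>(u,v,s,r). ((u,v),(s,r))"]) auto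
  then have "card T4 = card (?P \<times> (carrier G \<times> carrier G))" by (simp add: bij_betw_same_card)
  also have "\<dots> = card ?P * (order G * order G)" by (simp add: card_cartesian_product order_def)
  finally show ?thesis using comm_count[OF fin] by simp
qed

lemma tuple_card:
  "card {a \<in> {1..4::nat} \<rightarrow>\<^sub>E carrier G. P (a 1) (a 2) (a 3) (a 4)} = card {t\<in>Q4. case t of (w,x,y,z) \<Rightarrow> P w x y z}"
proof -
  let ?g = "\<lambda>(w,x,y,z). (\<lambda>i::nat. if i=1 then w else if i=2 then x else if i=3 then y else if i=4 then z else undefined)"
  have "bij_betw (\<lambda>a. (a 1, a 2, a 3, a 4)) {a \<in> {1..4::nat} \<rightarrow>\<^sub>E carrier G. P (a 1) (a 2) (a 3) (a 4)} {t\<in>Q4. case t of (w,x,y,z) \<Rightarrow> P w x y z}"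
  proof (rule bij_betw_byWitness[where f'="?g"])
    show "\<forall>a\<in>{a \<in> {1..4::nat} \<rightarrow>\<^sub>E carrier G. P (a 1) (a 2) (a 3) (a 4)}. ?g (a 1, a 2, a 3, a 4) = a"
    proof
      fix a assume a: "a \<in> {a \<in> {1..4::nat} \<rightarrow>\<^sub>E carrier G. P (a 1) (a 2) (a 3) (a 4)}"
      show "?g (a 1, a 2, a 3, a 4) = a"
      proof
        fix i :: nat
        show "?g (a 1, a 2, a 3, a 4) i = a i"
        proof (cases "i \<in> {1..4}")
          case True
          then have "i = 1 \<or> i = 2 \<or> i = 3 \<or> i = 4" by auto
          then show ?thesis by auto
        qed (use a in \<open>auto simp: PiE_def extensional_def\<close>)
      qed
    qed
  qed (auto simp: PiE_def extensional_def)
  then show ?thesis by (rule bij_betw_same_card)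
qed
end

lemma perm4_cases:
  fixes p1 p2 p3 p4 :: nat
  assumes "p1 \<in> {1,2,3,4}" "p2 \<in> {1,2,3,4}" "p3 \<in> {1,2,3,4}" "p4 \<in> {1,2,3,4}"
   "p1 \<noteq> p2" "p1 \<noteq> p3" "p1 \<noteq> p4" "p2 \<noteq> p3" "p2 \<noteq> p4" "p3 \<noteq> p4"
   "\<not> (p1 = 1 \<and> p2 = 2 \<and> p3 = 3 \<and> p4 = 4)" "p1 = 1 \<or> p4 = 4"
  shows "(p1,p2,p3,p4) \<in> {(1,3,2,4), (1,2,4,3), (1,4,3,2), (1,3,4,2), (1,4,2,3), (2,1,3,4), (3,2,1,4), (2,3,1,4), (3,1,2,4)}"
proof -
  from assms(1) have "p1 = 1 \<or> p1 = 2 \<or> p1 = 3 \<or> p1 = 4" by simp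
  moreover from assms(2) have "p2 = 1 \<or> p2 = 2 \<or> p2 = 3 \<or> p2 = 4" by simp
  moreover from assms(3) have "p3 = 1 \<or> p3 = 2 \<or> p3 = 3 \<or> p3 = 4" by simp
  moreover from assms(4) have "p4 = 1 \<or> p4 = 2 \<or> p4 = 3 \<or> p4 = 4" by simp
  ultimately show ?thesis using assms(5-12)
    by (elim disjE) simp_all
qed

context group begin
lemma count_main:
  assumes "(p1,p2,p3,p4) \<in> {(1,3,2,4), (1,2,4,3), (1,4,3,2), (1,3,4,2), (1,4,2,3), (2,1,3,4), (3,2,1,4), (2,3,1,4), (3,1,2,4)}"
  shows "card {a \<in> {1..4::nat} \<rightarrow>\<^sub>E carrier G. a 1 \<otimes> a 2 \<otimes> a 3 \<otimes> a 4 = a p1 \<otimes> a p2 \<otimes> a p3 \<otimes> a p4} = card T4"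
proof -
  consider "p1 = 1" "p2 = 3" "p3 = 2" "p4 = 4" | "p1 = 1" "p2 = 2" "p3 = 4" "p4 = 3" | "p1 = 1" "p2 = 4" "p3 = 3" "p4 = 2" | "p1 = 1" "p2 = 3" "p3 = 4" "p4 = 2" | "p1 = 1" "p2 = 4" "p3 = 2" "p4 = 3" | "p1 = 2" "p2 = 1" "p3 = 3" "p4 = 4" | "p1 = 3" "p2 = 2" "p3 = 1" "p4 = 4" | "p1 = 2" "p2 = 3" "p3 = 1" "p4 = 4" | "p1 = 3" "p2 = 1" "p3 = 2" "p4 = 4"
    using assms unfolding insert_iff empty_iff prod.inject by (elim disjE conjE FalseE) blast+
  then show ?thesis
  proof cases
    case 1
    then show ?thesis using tuple_card[of "\<lambda>w x y z. w\<otimes>x\<otimes>y\<otimes>z = w\<otimes>y\<otimes>x\<otimes>z"] caseA by simp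
  next
    case 2
    then show ?thesis using tuple_card[of "\<lambda>w x y z. w\<otimes>x\<otimes>y\<otimes>z = w\<otimes>x\<otimes>z\<otimes>y"] caseB by simp
  next
    case 3
    then show ?thesis using tuple_card[of "\<lambda>w x y z. w\<otimes>x\<otimes>y\<otimes>z = w\<otimes>z\<otimes>y\<otimes>x"] caseC by simp
  next
    case 4
    then show ?thesis using tuple_card[of "\<lambda>w x y z. w\<otimes>x\<otimes>y\<otimes>z = w\<otimes>y\<otimes>z\<otimes>x"] caseD by simp
  next
    case 5
    then show ?thesis using tuple_card[of "\<lambda>w x y z. w\<otimes>x\<otimes>y\<otimes>z = w\<otimes>z\<otimes>x\<otimes>y"] caseE by simp
  next
    case 6
    then show ?thesis using tuple_card[of "\<lambda>w x y z. w\<otimes>x\<otimes>y\<otimes>z = x\<otimes>w\<otimes>y\<otimes>z"] caseF by simp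
  next
    case 7
    then show ?thesis using tuple_card[of "\<lambda>w x y z. w\<otimes>x\<otimes>y\<otimes>z = y\<otimes>x\<otimes>w\<otimes>z"] caseG by simp
  next
    case 8
    then show ?thesis using tuple_card[of "\<lambda>w x y z. w\<otimes>x\<otimes>y\<otimes>z = x\<otimes>y\<otimes>w\<otimes>z"] caseH by simp
  next
    case 9
    then show ?thesis using tuple_card[of "\<lambda>w x y z. w\<otimes>x\<otimes>y\<otimes>z = y\<otimes>w\<otimes>x\<otimes>z"] caseI by simp
  qed
qed
end

theorem mainTheorem6:
  fixes G :: "('g, 'b) monoid_scheme" and \<pi> :: "nat \<Rightarrow> nat"
  assumes "group G" and "finite (carrier G)"
    and "\<pi> permutes {1..4}" and "\<pi> \<noteq> id"
    and "\<pi> 1 = 1 \<or> \<pi> 4 = 4"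
  shows "Pr_perm G 4 \<pi> = real (card (conj_classes G)) / real (order G)"
proof -
  interpret group G by fact
  have fin: "finite (carrier G)" by fact
  have pin: "\<And>i. i \<in> {1..4} \<Longrightarrow> \<pi> i \<in> {1..4}"
    using assms(3) permutes_in_image by metis
  have up: "[1..<4+1] = [1,2,3,4::nat]" by (simp add: upt_rec)
  let ?S = "{a \<in> {1..4} \<rightarrow>\<^sub>E carrier G. word_prod G a [1..<4+1] = word_prod G a (map \<pi> [1..<4+1])}"
  have Seq: "?S = {a \<in> {1..4::nat} \<rightarrow>\<^sub>E carrier G. a 1 \<otimes>\<^bsub>G\<^esub> a 2 \<otimes>\<^bsub>G\<^esub> a 3 \<otimes>\<^bsub>G\<^esub> a 4 = a (\<pi> 1) \<otimes>\<^bsub>G\<^esub> a (\<pi> 2) \<otimes>\<^bsub>G\<^esub> a (\<pi> 3) \<otimes>\<^bsub>G\<^esub> a (\<pi> 4)}"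
  proof (rule Collect_cong, rule conj_cong[OF refl])
    fix a assume a: "a \<in> {1..4::nat} \<rightarrow>\<^sub>E carrier G"
    have c: "\<And>i. i \<in> {1..4} \<Longrightarrow> a i \<in> carrier G" using a by auto
    have c': "\<And>i. i \<in> {1..4} \<Longrightarrow> a (\<pi> i) \<in> carrier G" using c pin by blast
    show "(word_prod G a [1..<4+1] = word_prod G a (map \<pi> [1..<4+1])) = (a 1 \<otimes>\<^bsub>G\<^esub> a 2 \<otimes>\<^bsub>G\<^esub> a 3 \<otimes>\<^bsub>G\<^esub> a 4 = a (\<pi> 1) \<otimes>\<^bsub>G\<^esub> a (\<pi> 2) \<otimes>\<^bsub>G\<^esub> a (\<pi> 3) \<otimes>\<^bsub>G\<^esub> a (\<pi> 4))"
      unfolding up using c[of 1] c[of 2] c[of 3] c[of 4] c'[of 1] c'[of 2] c'[of 3] c'[of 4]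
      by (simp add: m_assoc)
  qed
  have vals: "\<And>i. i \<in> {1..4::nat} \<Longrightarrow> \<pi> i = 1 \<or> \<pi> i = 2 \<or> \<pi> i = 3 \<or> \<pi> i = 4"
    using pin by fastforce
  have inj: "inj \<pi>" using assms(3) by (rule permutes_inj)
  have d: "\<pi> 1 \<noteq> \<pi> 2" "\<pi> 1 \<noteq> \<pi> 3" "\<pi> 1 \<noteq> \<pi> 4" "\<pi> 2 \<noteq> \<pi> 3" "\<pi> 2 \<noteq> \<pi> 4" "\<pi> 3 \<noteq> \<pi> 4"
  proof -
    have ne: "\<pi> i \<noteq> \<pi> j" if "i \<noteq> j" for i j using inj that by (metis injD)
    show "\<pi> 1 \<noteq> \<pi> 2" "\<pi> 1 \<noteq> \<pi> 3" "\<pi> 1 \<noteq> \<pi> 4" "\<pi> 2 \<noteq> \<pi> 3" "\<pi> 2 \<noteq> \<pi> 4" "\<pi> 3 \<noteq> \<pi> 4"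
      by (rule ne; simp)+
  qed
  have notid: "\<not> (\<pi> 1 = 1 \<and> \<pi> 2 = 2 \<and> \<pi> 3 = 3 \<and> \<pi> 4 = 4)"
  proof
    assume h: "\<pi> 1 = 1 \<and> \<pi> 2 = 2 \<and> \<pi> 3 = 3 \<and> \<pi> 4 = 4"
    have "\<pi> = id"
    proof
      fix i show "\<pi> i = id i"
      proof (cases "i \<in> {1..4}")
        case True
        then have "i = 1 \<or> i = 2 \<or> i = 3 \<or> i = 4" by auto
        then show ?thesis using h by auto
      next
        case False then show ?thesis using assms(3) by (simp add: permutes_not_in)
      qed
    qed
    then show False using assms(4) by simp
  qed
  have mem: "(\<pi> 1, \<pi> 2, \<pi> 3, \<pi> 4) \<in> {(1,3,2,4), (1,2,4,3), (1,4,3,2), (1,3,4,2), (1,4,2,3), (2,1,3,4), (3,2,1,4), (2,3,1,4), (3,1,2,4)}"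
    apply (rule perm4_cases)
    using vals[of 1] vals[of 2] vals[of 3] vals[of 4] d notid assms(5) by simp_all
  have cS: "card ?S = card (conj_classes G) * order G * order G * order G"
    using Seq count_main[OF mem] card_T4[OF fin] by simp
  have pos: "order G > 0" using fin one_closed unfolding order_def by (auto simp: card_gt_0_iff)
  define c where "c = real (card (conj_classes G))"
  define oo where "oo = real (order G)"
  have o0: "oo \<noteq> 0" using pos unfolding oo_def by simp
  have X0: "oo * oo * oo \<noteq> 0" using o0 by simp
  have "Pr_perm G 4 \<pi> = (c * (oo * oo * oo)) / (oo * (oo * oo * oo))"
    unfolding Pr_perm_def cS c_def oo_def by (simp add: power4_eq_xxxx ac_simps)
  also have "\<dots> = c / oo" using X0 by (rule nonzero_mult_divide_mult_cancel_right)
  finally show ?thesis unfolding c_def oo_def .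
qed

end
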